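(* Let $G$ be a graph and let $H$ be an induced subdivision of the $1$-pan in $G$ having the minimum number of vertices among all induced subdivisions of the $1$-pan in $G$. Write $H=(u,C)$, where $u$ is the vertex of degree $1$ of $H$ and $C$ is the cycle of $H$. If $|V(C)|\ge 5$, then every vertex of $V(G)\setminus V(H)$ has at most one neighbor in $V(C)$.
   Context: All graphs are finite and simple. An induced subdivision of a graph $F$ in $G$ is an induced subgraph of $G$ isomorphic to a graph obtained from $F$ by repeatedly replacing edges by paths of length $2$ through new vertices. The $1$-pan is the graph obtained from a triangle by adding a new vertex adjacent to exactly one vertex of the triangle; an induced subdivision of it consists of an induced cycle $C$ and one further vertex $u$ adjacent to exactly one vertex of $C$. *)

theory Defs
  imports Main
begin

definition simple_graph :: "'a set \<Rightarrow> ('a \<Rightarrow> 'a \<Rightarrow> bool) \<Rightarrow> bool" where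
  "simple_graph V E \<longleftrightarrow> finite V \<and> (\<forall>x y. E x y \<longrightarrow> E y x) \<and> (\<forall>x. \<not> E x x)
     \<and> (\<forall>x y. E x y \<longrightarrow> x \<in> V \<and> y \<in> V)"

definition induced_cycle :: "'a set \<Rightarrow> ('a \<Rightarrow> 'a \<Rightarrow> bool) \<Rightarrow> 'a list \<Rightarrow> bool" where
  "induced_cycle V E cs \<longleftrightarrow> length cs \<ge> 3 \<and> distinct cs \<and> set cs \<subseteq> V \<and>
     (\<forall>i < length cs. \<forall>j < length cs.
        E (cs ! i) (cs ! j) \<longleftrightarrow> (j = Suc i mod length cs \<or> i = Suc j mod length cs))"

text \<open>An induced subdivision of the 1-pan: an induced cycle C (given as a cyclic list)
  together with a vertex u outside C adjacent to exactly one vertex of C.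
  Its vertex set is set C \<union> {u}.\<close>
definition induced_pan :: "'a set \<Rightarrow> ('a \<Rightarrow> 'a \<Rightarrow> bool) \<Rightarrow> 'a \<Rightarrow> 'a list \<Rightarrow> bool" where
  "induced_pan V E u C \<longleftrightarrow> induced_cycle V E C \<and> u \<in> V \<and> u \<notin> set C \<and>
     card {c \<in> set C. E u c} = 1"

end

theory Submission
  imports Defs
begin

lemma modeq_aux: "x \<le> y \<Longrightarrow> y < n \<Longrightarrow> (a + x) mod n = (a + y) mod (n::nat) \<Longrightarrow> x = y"
proof (rule ccontr)
  assume h: "x \<le> y" "y < n" "(a + x) mod n = (a + y) mod n" "x \<noteq> y"
  have "n dvd (a + y) - (a + x)" using h by (metis mod_eq_dvd_iff_nat add_le_mono1 add.commute)
  hence "n dvd y - x" by simp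
  moreover have "0 < y - x" "y - x < n" using h by auto
  ultimately show False using nat_dvd_not_less by blast
qed

lemma modeq: "x < n \<Longrightarrow> y < n \<Longrightarrow> ((a + x) mod n = (a + y) mod (n::nat)) \<longleftrightarrow> x = y"
  by (metis modeq_aux nat_le_linear)

lemma mod_le_eq: "(m::nat) \<le> d + 2 \<Longrightarrow> m mod (d+2) = (if m = d+2 then 0 else m)"
  by auto

lemma triangle_cycle:
  assumes "simple_graph V E" "distinct [x,y,z]" "x \<in> V" "y \<in> V" "z \<in> V"
    "E x y" "E y z" "E x z"
  shows "induced_cycle V E [x,y,z]"
proof -
  have s: "\<And>p q. E p q \<Longrightarrow> E q p" and irr: "\<And>p. \<not> E p p"
    using assms(1) unfolding simple_graph_def by blast+
  have "E y x" "E z y" "E z x" using s assms by blast+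
  note e = this assms(6-8) irr
  have i3: "\<And>i. i < 3 \<Longrightarrow> i = 0 \<or> i = 1 \<or> i = (2::nat)" by auto
  have "\<forall>i<3. \<forall>j<3. E ([x,y,z] ! i) ([x,y,z] ! j) \<longleftrightarrow> (j = Suc i mod 3 \<or> i = Suc j mod 3)"
  proof (intro allI impI)
    fix i j :: nat assume a: "i < 3" "j < 3"
    show "E ([x,y,z] ! i) ([x,y,z] ! j) \<longleftrightarrow> (j = Suc i mod 3 \<or> i = Suc j mod 3)"
      using i3[OF a(1)] i3[OF a(2)] e by (elim disjE) simp_all
  qed
  then show ?thesis using assms unfolding induced_cycle_def by simp
qed

context
  fixes V :: "'a set" and E :: "'a \<Rightarrow> 'a \<Rightarrow> bool" and C :: "'a list"
  assumes sg: "simple_graph V E" and ic: "induced_cycle V E C"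
begin

definition cc :: "nat \<Rightarrow> 'a" where "cc i = C ! (i mod length C)"

lemma Esym: "E p q \<Longrightarrow> E q p" using sg unfolding simple_graph_def by blast
lemma Eirr: "\<not> E p p" using sg unfolding simple_graph_def by blast

lemma len3: "length C \<ge> 3" using ic by (simp add: induced_cycle_def)
lemma lpos: "0 < length C" using len3 by linarith
lemma Cne: "C \<noteq> []" using lpos by auto

lemma cc_in: "cc i \<in> set C"
proof -
  have "i mod length C < length C" using lpos by simp
  then show ?thesis unfolding cc_def by (rule nth_mem)
qed

lemma cc_V: "cc i \<in> V" using cc_in ic unfolding induced_cycle_def by blast

lemma cc_eq: "cc i = cc j \<longleftrightarrow> i mod length C = j mod length C"
proof -
  have d: "distinct C" using ic unfolding induced_cycle_def by blast
  show ?thesis unfolding cc_def by (rule nth_eq_iff_index_eq[OF d]) (use lpos in simp_all)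
qed

lemma cc_adj: "E (cc i) (cc j) \<longleftrightarrow> (j mod length C = Suc i mod length C \<or> i mod length C = Suc j mod length C)"
proof -
  have l: "0 < length C" by (rule lpos)
  have "E (C ! (i mod length C)) (C ! (j mod length C)) \<longleftrightarrow>
     (j mod length C = Suc (i mod length C) mod length C \<or> i mod length C = Suc (j mod length C) mod length C)"
    using ic l Cne unfolding induced_cycle_def by simp
  then show ?thesis unfolding cc_def by (simp add: mod_Suc_eq)
qed

lemma cc_mod: "cc (i + length C) = cc i" unfolding cc_def by simp

lemma smod: "x < d + 2 \<Longrightarrow> Suc x mod (d+2) = (if x = d+1 then 0 else Suc x)"
  by auto

lemma long_pan:
  assumes v: "v \<in> V" "v \<notin> set C" and d: "1 \<le> d" "d + 3 \<le> length C"
    and na: "E v (cc a)" and nd: "E v (cc (a+d))"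
    and ni: "\<And>k. 0 < k \<Longrightarrow> k < d \<Longrightarrow> \<not> E v (cc (a+k))"
    and nw: "\<not> E v (cc (a + length C - 1))"
  shows "induced_pan V E (cc (a + length C - 1)) (v # map (\<lambda>k. cc (a+k)) [0..<Suc d])
     \<and> card (set (v # map (\<lambda>k. cc (a+k)) [0..<Suc d]) \<union> {cc (a + length C - 1)}) = d + 3"
proof -
  let ?n = "length C"
  define f where "f = (\<lambda>k. cc (a+k))"
  define L where "L = v # map f [0..<Suc d]"
  define w where "w = cc (a + length C - 1)"
  have ar: "a + ?n - 1 = a + (?n - 1)" using lpos by arith
  have weq: "w = cc (a + (?n - 1))" unfolding w_def ar ..
  have adjf: "E (f k) (f l) \<longleftrightarrow> (l = Suc k \<or> k = Suc l)" if "k \<le> d" "l \<le> d" for k l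
  proof -
    have kl: "Suc k < ?n" "l < ?n" "k < ?n" "Suc l < ?n" using d that by auto
    have "E (f k) (f l) \<longleftrightarrow> ((a+l) mod ?n = (a + Suc k) mod ?n \<or> (a+k) mod ?n = (a + Suc l) mod ?n)"
      unfolding f_def cc_adj by simp
    also have "\<dots> \<longleftrightarrow> (l = Suc k \<or> k = Suc l)" using modeq[OF kl(2,1)] modeq[OF kl(3,4)] by simp
    finally show ?thesis .
  qed
  have injf: "f k = f l \<longleftrightarrow> k = l" if "k \<le> d" "l \<le> d" for k l
  proof -
    have kl: "k < ?n" "l < ?n" using d that by auto
    show ?thesis unfolding f_def cc_eq using modeq[OF kl] by simp
  qed
  have fC: "f k \<in> set C" for k unfolding f_def by (rule cc_in)
  have lenL: "length L = d + 2" unfolding L_def by simp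
  have Lnth: "L ! Suc k = f k" if "k \<le> d" for k
    unfolding L_def using that by (simp del: upt_Suc)
  have L0: "L ! 0 = v" unfolding L_def by simp
  have distL: "distinct L"
  proof -
    have "inj_on f {0..<Suc d}" unfolding inj_on_def using injf by auto
    moreover have "v \<notin> f ` {0..<Suc d}" using fC v by auto
    ultimately show ?thesis unfolding L_def by (simp add: distinct_map del: upt_Suc)
  qed
  have setL: "set L = insert v (f ` {0..<Suc d})" unfolding L_def by (simp del: upt_Suc)
  have setLV: "set L \<subseteq> V" unfolding setL using v cc_V f_def by auto
  have vf: "E v (f l) \<longleftrightarrow> (l = 0 \<or> l = d)" if "l \<le> d" for l
    using na nd ni[of l] that unfolding f_def by (cases "l = 0"; cases "l = d") auto
  have cyc: "\<forall>i<length L. \<forall>j<length L. E (L!i) (L!j) \<longleftrightarrow> (j = Suc i mod length L \<or> i = Suc j mod length L)"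
  proof (intro allI impI)
    fix i j assume ij: "i < length L" "j < length L"
    show "E (L!i) (L!j) \<longleftrightarrow> (j = Suc i mod length L \<or> i = Suc j mod length L)"
    proof (cases i)
      case 0
      show ?thesis
      proof (cases j)
        case 0
        then show ?thesis using \<open>i = 0\<close> Eirr[of v] L0 lenL by simp
      next
        case (Suc l)
        have l: "l \<le> d" using ij Suc lenL by simp
        have m2: "Suc (Suc l) mod length L = (if l = d then 0 else Suc (Suc l))"
          using l lenL by (cases "l = d") simp_all
        have m1: "Suc 0 mod length L = Suc 0" using lenL by simp
        show ?thesis unfolding \<open>i = 0\<close> Suc L0 Lnth[OF l] m1 m2 vf[OF l] using l by auto
      qed
    next
      case (Suc k)
      have k: "k \<le> d" using ij Suc lenL by simp
      show ?thesis
      proof (cases j)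
        case 0
        have sw: "E (f k) v \<longleftrightarrow> E v (f k)" using Esym by blast
        have m2: "Suc (Suc k) mod length L = (if k = d then 0 else Suc (Suc k))"
          using k lenL by (cases "k = d") simp_all
        have m1: "Suc 0 mod length L = Suc 0" using lenL by simp
        show ?thesis unfolding \<open>j = 0\<close> Suc L0 Lnth[OF k] m1 m2 sw vf[OF k] using k by auto
      next
        case (Suc l)
        have l: "l \<le> d" using ij Suc lenL by simp
        have m2: "Suc (Suc k) mod length L = (if k = d then 0 else Suc (Suc k))"
          using k lenL by (cases "k = d") simp_all
        have m3: "Suc (Suc l) mod length L = (if l = d then 0 else Suc (Suc l))"
          using l lenL by (cases "l = d") simp_all
        show ?thesis unfolding \<open>i = Suc k\<close> Suc Lnth[OF k] Lnth[OF l] adjf[OF k l] m2 m3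
          using k l by auto
      qed
    qed
  qed
  have icL: "induced_cycle V E L" unfolding induced_cycle_def using lenL distL setLV cyc d(1) by simp
  have wV: "w \<in> V" unfolding w_def by (rule cc_V)
  have wf: "E w (f k) \<longleftrightarrow> k = 0" if "k \<le> d" for k
  proof -
    have kl: "k < ?n" "?n - 1 < ?n" "Suc k < ?n" "0 < ?n" using d that by auto
    have e1: "Suc (a + (?n - 1)) = a + ?n" using lpos by simp
    have "E w (f k) \<longleftrightarrow> ((a+k) mod ?n = (a + 0) mod ?n \<or> (a + (?n - 1)) mod ?n = (a + Suc k) mod ?n)"
      unfolding weq f_def cc_adj e1 by simp
    also have "\<dots> \<longleftrightarrow> k = 0" using modeq[OF kl(1,4)] modeq[OF kl(2,3)] d that by auto
    finally show ?thesis .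
  qed
  have wv: "\<not> E w v" using nw Esym unfolding w_def by blast
  have wnot: "w \<notin> set L"
  proof
    assume wL: "w \<in> set L"
    have wv': "w \<noteq> v" using v cc_in unfolding w_def by auto
    have wf': "w \<noteq> f k" if "k \<le> d" for k
    proof -
      have kl: "k < ?n" "?n - 1 < ?n" using d that by auto
      show ?thesis unfolding weq f_def cc_eq using modeq[OF kl(2,1)] d that by auto
    qed
    from wL consider "w = v" | k where "k < Suc d" "w = f k" unfolding setL by auto
    then show False
    proof cases
      case 1 then show ?thesis using wv' by simp
    next
      case 2 then show ?thesis using wf'[of k] by simp
    qed
  qed
  have nb: "{c \<in> set L. E w c} = {f 0}"
  proof -
    have "f 0 \<in> set L" unfolding setL by auto
    moreover have "E w (f 0)" using wf by simp
    moreover have "c = f 0" if "c \<in> set L" "E w c" for c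
      using that wv wf unfolding setL by auto
    ultimately show ?thesis by blast
  qed
  have pan: "induced_pan V E w L" unfolding induced_pan_def using icL wV wnot nb by simp
  have "card (set L \<union> {w}) = card (set (w # L))" by simp
  also have "\<dots> = d + 3" using distinct_card[of "w # L"] distL wnot lenL by simp
  finally show ?thesis using pan unfolding L_def f_def w_def by simp
qed

end


lemma contra2: "P \<and> c = k \<Longrightarrow> (P \<Longrightarrow> n + 1 \<le> c) \<Longrightarrow> (n::nat) + 1 \<le> k"
  by auto

lemma contra: "P \<and> c = k \<Longrightarrow> (P \<Longrightarrow> n + 1 \<le> c) \<Longrightarrow> k < (n::nat) + 1 \<Longrightarrow> False"
  by auto

lemma tri_pan:
  assumes "simple_graph V E" "distinct [x,y,z]" "x \<in> V" "y \<in> V" "z \<in> V"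
    "E x y" "E y z" "E x z" "w \<in> V" "w \<notin> {x,y,z}" "card {c \<in> {x,y,z}. E w c} = 1"
  shows "induced_pan V E w [x,y,z] \<and> card (set [x,y,z] \<union> {w}) = 4"
proof -
  have cy: "induced_cycle V E [x,y,z]" by (rule triangle_cycle[OF assms(1-8)])
  have c: "card (set [x,y,z] \<union> {w}) = 4" using assms(2,10) by simp
  have "induced_pan V E w [x,y,z]" unfolding induced_pan_def using cy assms(9,10,11) by simp
  then show ?thesis using c by blast
qed

theorem mainTheorem13:
  fixes V :: "'a set" and E :: "'a \<Rightarrow> 'a \<Rightarrow> bool" and u :: 'a and C :: "'a list"
  assumes "simple_graph V E"
    and "induced_pan V E u C"
    and "\<And>u' C'. induced_pan V E u' C' \<Longrightarrow> card (set C \<union> {u}) \<le> card (set C' \<union> {u'})"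
    and "card (set C) \<ge> 5"
  shows "\<forall>v \<in> V - (set C \<union> {u}). card {c \<in> set C. E v c} \<le> 1"
proof (rule ballI, rule ccontr)
  fix v assume vin: "v \<in> V - (set C \<union> {u})" and nc: "\<not> card {c \<in> set C. E v c} \<le> 1"
  note sg = assms(1)
  have ic: "induced_cycle V E C" and uV: "u \<in> V" and uC: "u \<notin> set C"
    and u1: "card {c \<in> set C. E u c} = 1"
    using assms(2) unfolding induced_pan_def by auto
  have dC: "distinct C" using ic unfolding induced_cycle_def by blast
  let ?n = "length C"
  have n5: "5 \<le> ?n" using assms(4) distinct_card[OF dC] by simp
  have Cne: "C \<noteq> []" using n5 by (cases C) auto
  have cardCu: "card (set C \<union> {u}) = ?n + 1" using uC distinct_card[OF dC] by simp
  have minp: "?n + 1 \<le> card (set C' \<union> {u'})" if "induced_pan V E u' C'" for u' C'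
    using assms(3)[OF that] cardCu by simp
  have vV: "v \<in> V" and vC: "v \<notin> set C" and vu: "v \<noteq> u" using vin by auto
  define N where "N i \<longleftrightarrow> E v (cc C i)" for i
  have ccn: "cc C i = C ! i" if "i < ?n" for i using cc_def[OF sg ic] that by simp
  have Nmod: "N (i + ?n) = N i" for i unfolding N_def using cc_mod[OF sg ic] by simp
  have Nmod2: "N i = N (i mod ?n)" for i unfolding N_def cc_def[OF sg ic] by simp
  have "\<not> (\<forall>a1\<in>{c \<in> set C. E v c}. \<forall>a2\<in>{c \<in> set C. E v c}. a1 = a2)"
    using nc card_le_Suc0_iff_eq[of "{c \<in> set C. E v c}"] by auto
  then obtain x y where xy: "x \<in> set C" "y \<in> set C" "E v x" "E v y" "x \<noteq> y" by auto
  obtain bx where bx: "bx < ?n" "x = C ! bx" using xy(1) by (auto simp: in_set_conv_nth)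
  obtain by' where by': "by' < ?n" "y = C ! by'" using xy(2) by (auto simp: in_set_conv_nth)
  have Nbx: "N bx" using bx xy ccn unfolding N_def by simp
  have Nby: "N by'" using by' xy ccn unfolding N_def by simp
  show False
  proof (cases "\<forall>i. N i")
    case True
    obtain c0 where c0: "{c \<in> set C. E u c} = {c0}" using u1 card_1_singletonE by blast
    then have "c0 \<in> set C" by auto
    then obtain p where p: "p < ?n" "c0 = C ! p" by (auto simp: in_set_conv_nth)
    have up: "E u (cc C p)" using c0 p ccn by auto
    have uq: "\<not> E u (cc C (p + k))" if "0 < k" "k < ?n" for k
    proof
      assume "E u (cc C (p + k))"
      then have "cc C (p + k) = cc C p" using c0 p ccn cc_in[OF sg ic] by auto
      then have "(p + k) mod ?n = (p + 0) mod ?n" using cc_eq[OF sg ic] by simp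
      moreover have "0 < ?n" using that by linarith
      ultimately have "k = 0" using modeq[of k ?n 0 p] that by blast
      then show False using that by simp
    qed
    have ccadj: "E (cc C (p + k)) (cc C (p + Suc k))" for k
      using cc_adj[OF sg ic] by simp
    have ccne: "cc C (p + k) \<noteq> cc C (p + l)" if "k < ?n" "l < ?n" "k \<noteq> l" for k l
      using cc_eq[OF sg ic] modeq[OF that(1,2)] that by simp
    have ccV: "cc C i \<in> V" for i using cc_V[OF sg ic] .
    have ccC: "cc C i \<in> set C" for i using cc_in[OF sg ic] .
    have vnc: "v \<noteq> cc C i" for i using vC ccC by metis
    have unc: "u \<noteq> cc C i" for i using uC ccC by metis
    show False
    proof (cases "E u v")
      case True
      have s: "{c \<in> {v, cc C (p+2), cc C (p+3)}. E u c} = {v}"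
        using True uq[of 2] uq[of 3] n5 by auto
      have "induced_pan V E u [v, cc C (p+2), cc C (p+3)] \<and>
            card (set [v, cc C (p+2), cc C (p+3)] \<union> {u}) = 4"
        apply (rule tri_pan[OF sg])
        using vnc ccne[of 2 3] n5 vV ccV \<open>\<forall>i. N i\<close> ccadj[of 2] vu unc uV s
        by (auto simp: N_def numeral_eq_Suc)
      then have "?n + 1 \<le> 4" by (rule contra2[OF _ minp])
      then show False using n5 by linarith
    next
      case False
      have ne: "cc C p \<noteq> cc C (p+1)" using ccne[of 0 1] n5 Cne by simp
      have ad: "E (cc C p) (cc C (p+1))" using ccadj[of 0] by simp
      have s: "{c \<in> {v, cc C p, cc C (p+1)}. E u c} = {cc C p}"
        using False uq[of 1] up n5 by auto
      have "induced_pan V E u [v, cc C p, cc C (p+1)] \<and>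
            card (set [v, cc C p, cc C (p+1)] \<union> {u}) = 4"
        apply (rule tri_pan[OF sg])
        using vnc ne vV ccV \<open>\<forall>i. N i\<close> ad vu unc uV s
        by (auto simp: N_def)
      then have "?n + 1 \<le> 4" by (rule contra2[OF _ minp])
      then show False using n5 by linarith
    qed
  next
    case False
    then obtain j where nj: "\<not> N j" by blast
    define k0 where "k0 = (LEAST k. N (j + k))"
    have ex: "N (j + (?n - j mod ?n + bx))"
    proof -
      have "(j + (?n - j mod ?n + bx)) mod ?n = (j mod ?n + (?n - j mod ?n + bx)) mod ?n"
        by (simp add: mod_add_left_eq)
      also have "\<dots> = (?n + bx) mod ?n" using n5
        by (metis add.assoc le_add_diff_inverse less_or_eq_imp_le mod_less_divisor
            bot_nat_0.not_eq_extremum not_numeral_le_zero)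
      also have "\<dots> = bx" using bx by simp
      finally show ?thesis using Nmod2 Nbx by metis
    qed
    have Nk0: "N (j + k0)" unfolding k0_def using ex by (rule LeastI)
    have k0pos: "k0 \<noteq> 0" using Nk0 nj by (metis add.right_neutral)
    define a where "a = j + k0"
    have Na: "N a" using Nk0 a_def by simp
    have nw: "\<not> N (a + ?n - 1)"
    proof -
      have "a + ?n - 1 = (j + (k0 - 1)) + ?n" using k0pos unfolding a_def by simp
      moreover have "\<not> N (j + (k0 - 1))" unfolding k0_def
        by (rule not_less_Least) (use k0pos k0_def in simp)
      ultimately show ?thesis using Nmod by simp
    qed
    obtain b2 where b2: "b2 < ?n" "N b2" "b2 \<noteq> a mod ?n"
    proof (cases "bx = a mod ?n")
      case True
      have "by' \<noteq> bx" using xy(5) bx by' by auto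
      then show ?thesis using that[of by'] by' Nby True by simp
    next
      case False
      then show ?thesis using that[of bx] bx Nbx by simp
    qed
    define d0 where "d0 = (b2 + ?n - a mod ?n) mod ?n"
    have ad0: "(a + d0) mod ?n = b2"
    proof -
      have "(a + d0) mod ?n = (a mod ?n + (b2 + ?n - a mod ?n)) mod ?n"
        unfolding d0_def by (simp add: mod_add_left_eq mod_add_right_eq)
      also have "\<dots> = (b2 + ?n) mod ?n" using n5
        by (metis add.commute le_add_diff_inverse2 less_or_eq_imp_le mod_less_divisor
            bot_nat_0.not_eq_extremum not_numeral_le_zero trans_le_add2)
      also have "\<dots> = b2" using b2 by simp
      finally show ?thesis .
    qed
    have d0pos: "1 \<le> d0"
    proof (rule ccontr)
      assume "\<not> 1 \<le> d0" then have "d0 = 0" by simp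
      then show False using ad0 b2 by simp
    qed
    have d0n: "d0 < ?n" unfolding d0_def using Cne by simp
    have Nd0: "N (a + d0)" using ad0 b2 Nmod2 by metis
    define d where "d = (LEAST d. 1 \<le> d \<and> N (a + d))"
    have dP: "1 \<le> d \<and> N (a + d)" unfolding d_def using d0pos Nd0 by (intro LeastI) auto
    have dle: "d \<le> d0" unfolding d_def using d0pos Nd0 by (intro Least_le) auto
    have dint: "\<not> N (a + k)" if "0 < k" "k < d" for k
    proof -
      have "\<not> (1 \<le> k \<and> N (a + k))" using not_less_Least[of k "\<lambda>d. 1 \<le> d \<and> N (a + d)"] that
        unfolding d_def by blast
      then show ?thesis using that by simp
    qed
    have ar: "a + ?n - 1 = a + (?n - 1)" using n5 by simp
    have dne: "d \<noteq> ?n - 1" using dP nw ar by auto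
    have dn2: "d \<le> ?n - 2" using dne dle d0n by simp
    show False
    proof (cases "d \<le> ?n - 3")
      case True
      have "induced_pan V E (cc C (a + ?n - 1)) (v # map (\<lambda>k. cc C (a+k)) [0..<Suc d])
         \<and> card (set (v # map (\<lambda>k. cc C (a+k)) [0..<Suc d]) \<union> {cc C (a + ?n - 1)}) = d + 3"
        apply (rule long_pan[OF sg ic vV vC])
             apply (rule conjunct1[OF dP])
            apply (use True n5 in linarith)
           apply (use Na in \<open>simp add: N_def\<close>)
          apply (use dP in \<open>simp add: N_def\<close>)
         apply (use dint in \<open>simp add: N_def\<close>)
        apply (use nw in \<open>simp add: N_def\<close>)
        done
      then have "?n + 1 \<le> d + 3" by (rule contra2[OF _ minp])
      then show False using True n5 by linarith
    next
      case False
      then have dd: "d = ?n - 2" using dn2 by simp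
      define a' where "a' = a + (?n - 2)"
      have e1: "a' + 2 = a + ?n" unfolding a'_def using n5 by simp
      have e2: "a' + 1 = a + (?n - 1)" unfolding a'_def using n5 by simp
      have e3: "a' + ?n - 1 = (a + (?n - 3)) + ?n" unfolding a'_def using n5 by simp
      have h1: "N a'" unfolding a'_def using dP dd by metis
      have h2: "N (a' + 2)" unfolding e1 by (subst Nmod) (rule Na)
      have h3: "\<not> N (a' + k)" if "0 < k" "k < 2" for k
      proof -
        have "k = 1" using that by simp
        moreover have "a' + 1 = a + ?n - 1" by (simp only: e2 ar)
        ultimately show ?thesis using nw by (simp only: not_False_eq_True)
      qed
      have h4a: "\<not> N (a + (?n - 3))" using dint[of "?n - 3"] dd n5 by simp
      have h4b: "N (a' + ?n - 1) = N (a + (?n - 3))" unfolding e3 by (rule Nmod)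
      have h4: "\<not> N (a' + ?n - 1)" using h4a h4b by simp
      have "induced_pan V E (cc C (a' + ?n - 1)) (v # map (\<lambda>k. cc C (a'+k)) [0..<Suc 2])
         \<and> card (set (v # map (\<lambda>k. cc C (a'+k)) [0..<Suc 2]) \<union> {cc C (a' + ?n - 1)}) = 2 + 3"
        apply (rule long_pan[OF sg ic vV vC])
             apply simp
            apply (use n5 in linarith)
           apply (use h1 in \<open>simp add: N_def\<close>)
          apply (use h2 in \<open>simp add: N_def\<close>)
         apply (use h3 in \<open>simp add: N_def\<close>)
        apply (use h4 in \<open>simp add: N_def\<close>)
        done
      then have "?n + 1 \<le> 2 + 3" by (rule contra2[OF _ minp])
      then show False using n5 by linarith
    qed
  qed
qed

end
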